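(* Let $f:\mathbb{R}\to\mathbb{R}$ be a concave function such that $f(0)=0$, $f$ is differentiable at $0$, $f'(0)\neq 0$, $\sup_x f(x)=M>0$, and $\operatorname{argsup}_x f(x)>0$. Let $\mathbb{P}$ and $\mathbb{Q}$ be probability distributions with support $\mathcal{X}$. Define $$\mathrm{D}^{S}(\mathbb{P},\mathbb{Q})=\sup_{C:\mathcal{X}\to\mathbb{R}}\mathbb{E}_{x\sim\mathbb{P}}[f(C(x))]+\mathbb{E}_{y\sim\mathbb{Q}}[f(-C(y))],$$ $$\mathrm{D}^{Rp}_f(\mathbb{P},\mathbb{Q})=\sup_{C:\mathcal{X}\to\mathbb{R}} 2\,\mathbb{E}_{x\sim\mathbb{P},\,y\sim\mathbb{Q}}\big[f(C(x)-C(y))\big],$$ $$\mathrm{D}^{Ralf}_f(\mathbb{P},\mathbb{Q})=\sup_{C:\mathcal{X}\to\mathbb{R}} 2\,\mathbb{E}_{x\sim\mathbb{P}}\Big[f\big(C(x)-\mathbb{E}_{y\sim\mathbb{Q}}C(y)\big)\Big],$$ $$\mathrm{D}^{Ra}_f(\mathbb{P},\mathbb{Q})=\sup_{C:\mathcal{X}\to\mathbb{R}} \mathbb{E}_{x\sim\mathbb{P}}\Big[f\big(C(x)-\mathbb{E}_{y\sim\mathbb{Q}}C(y)\big)\Big]+\mathbb{E}_{y\sim\mathbb{Q}}\Big[f\big(\mathbb{E}_{x\sim\mathbb{P}}C(x)-C(y)\big)\Big].$$ Then $\mathrm{D}^{S}(\mathbb{P},\mathbb{Q})\le \mathrm{D}^{Rp}_f(\mathbb{P},\mathbb{Q})$,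 $\mathrm{D}^{Rp}_f(\mathbb{P},\mathbb{Q})\le\mathrm{D}^{Ralf}_f(\mathbb{P},\mathbb{Q})$, and $\mathrm{D}^{Rp}_f(\mathbb{P},\mathbb{Q})\le\mathrm{D}^{Ra}_f(\mathbb{P},\mathbb{Q})$.
   Context: The suprema range over (measurable) critic functions $C:\mathcal{X}\to\mathbb{R}$ for which the expectations are defined. The condition $\operatorname{argsup}_x f(x)>0$ means the supremum of $f$ is reached at some positive $x$ (or approached as $x\to+\infty$). *)

theory Defs
  imports "HOL-Probability.Probability"
begin

definition argsup_pos :: "(real \<Rightarrow> real) \<Rightarrow> bool" where
  "argsup_pos f \<longleftrightarrow>
     (\<exists>x>0. f x = (SUP t. f t)) \<or> ((f \<longlongrightarrow> (SUP t. f t)) at_top)"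

definition D_S :: "(real \<Rightarrow> real) \<Rightarrow> 'a measure \<Rightarrow> 'a measure \<Rightarrow> real" where
  "D_S f P Q = (SUP C \<in> {C. C \<in> borel_measurable P
                         \<and> integrable P (\<lambda>x. f (C x))
                         \<and> integrable Q (\<lambda>y. f (- C y))}.
      (\<integral>x. f (C x) \<partial>P) + (\<integral>y. f (- C y) \<partial>Q))"

definition D_Rp :: "(real \<Rightarrow> real) \<Rightarrow> 'a measure \<Rightarrow> 'a measure \<Rightarrow> real" where
  "D_Rp f P Q = (SUP C \<in> {C. C \<in> borel_measurable P
                         \<and> integrable (P \<Otimes>\<^sub>M Q) (\<lambda>z. f (C (fst z) - C (snd z)))}.
      2 * (\<integral>z. f (C (fst z) - C (snd z)) \<partial>(P \<Otimes>\<^sub>M Q)))"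

definition D_Ralf :: "(real \<Rightarrow> real) \<Rightarrow> 'a measure \<Rightarrow> 'a measure \<Rightarrow> real" where
  "D_Ralf f P Q = (SUP C \<in> {C. C \<in> borel_measurable P
                         \<and> integrable Q C
                         \<and> integrable P (\<lambda>x. f (C x - (\<integral>y. C y \<partial>Q)))}.
      2 * (\<integral>x. f (C x - (\<integral>y. C y \<partial>Q)) \<partial>P))"

definition D_Ra :: "(real \<Rightarrow> real) \<Rightarrow> 'a measure \<Rightarrow> 'a measure \<Rightarrow> real" where
  "D_Ra f P Q = (SUP C \<in> {C. C \<in> borel_measurable P
                         \<and> integrable P C \<and> integrable Q C
                         \<and> integrable P (\<lambda>x. f (C x - (\<integral>y. C y \<partial>Q)))
                         \<and> integrable Q (\<lambda>y. f ((\<integral>x. C x \<partial>P) - C y))}.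
      (\<integral>x. f (C x - (\<integral>y. C y \<partial>Q)) \<partial>P) + (\<integral>y. f ((\<integral>x. C x \<partial>P) - C y) \<partial>Q))"

end

theory Submission
  imports Defs
begin

lemma concave_mid:
  fixes f :: "real \<Rightarrow> real"
  assumes "concave_on UNIV f"
  shows "(f a + f b) / 2 \<le> f ((a + b) / 2)"
proof -
  have "f ((1 - 1/2) *\<^sub>R a + (1/2) *\<^sub>R b) \<ge> (1 - 1/2) * f a + (1/2) * f b"
    by (rule concave_onD[OF assms]) auto
  then show ?thesis by (simp add: field_simps)
qed

lemma concave_between:
  fixes f :: "real \<Rightarrow> real"
  assumes "concave_on UNIV f" "f 0 = 0"
    and "(0 \<le> s \<and> s \<le> t) \<or> (t \<le> s \<and> s \<le> 0)"
  shows "min 0 (f t) \<le> f s"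
proof (cases "t = 0")
  case True
  then have "s = 0" using assms(3) by auto
  then show ?thesis using True assms(2) by simp
next
  case False
  define l where "l = s / t"
  have l0: "0 \<le> l" and l1: "l \<le> 1" using assms(3) False
    by (auto simp: l_def divide_simps)
  have "f ((1 - l) *\<^sub>R 0 + l *\<^sub>R t) \<ge> (1 - l) * f 0 + l * f t"
    by (rule concave_onD[OF assms(1)]) (use l0 l1 in auto)
  moreover have "(1 - l) *\<^sub>R 0 + l *\<^sub>R t = s" using False by (simp add: l_def)
  ultimately have "f s \<ge> l * f t" using assms(2) by simp
  moreover have "l * f t \<ge> min 0 (f t)"
  proof (cases "f t \<ge> 0")
    case True then show ?thesis using l0 by simp
  next
    case False
    then have "l * f t \<ge> 1 * f t" using l1 by (intro mult_right_mono_neg) auto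
    then show ?thesis by simp
  qed
  ultimately show ?thesis by simp
qed

lemma concave_bound:
  fixes f :: "real \<Rightarrow> real"
  assumes "concave_on UNIV f" "f 0 = 0" "\<And>x. f x \<le> M" "\<bar>s\<bar> \<le> R"
  shows "\<bar>f s\<bar> \<le> \<bar>M\<bar> + \<bar>f R\<bar> + \<bar>f (-R)\<bar>"
proof (cases "s \<ge> 0")
  case True
  then have "min 0 (f R) \<le> f s" using assms by (intro concave_between) auto
  then show ?thesis using assms(3)[of s] by linarith
next
  case False
  then have "min 0 (f (-R)) \<le> f s" using assms by (intro concave_between) auto
  then show ?thesis using assms(3)[of s] by linarith
qed

lemma concave_meas:
  fixes f :: "real \<Rightarrow> real"
  assumes "concave_on UNIV f"
  shows "f \<in> borel_measurable borel"
proof -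
  have "continuous_on UNIV (\<lambda>x. - f x)"
    using convex_on_continuous[of UNIV "\<lambda>x. - f x"] assms by (simp add: concave_on_def)
  then have "continuous_on UNIV f"
    using continuous_on_minus[of UNIV "\<lambda>x. - f x"] by simp
  then show ?thesis using borel_measurable_continuous_onI by blast
qed

lemma jensen_concave:
  fixes f :: "real \<Rightarrow> real"
  assumes "prob_space N" "concave_on UNIV f" "integrable N X" "integrable N (\<lambda>x. f (X x))"
  shows "(\<integral>x. f (X x) \<partial>N) \<le> f (\<integral>x. X x \<partial>N)"
proof -
  interpret prob_space N by fact
  have "(\<lambda>x. - f x) (expectation X) \<le> expectation (\<lambda>x. (\<lambda>x. - f x) (X x))"
    by (rule jensens_inequality[where I=UNIV]) (use assms in \<open>auto simp: concave_on_def\<close>)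
  then show ?thesis by simp
qed

lemma distr_pair_snd':
  assumes "prob_space M" "prob_space N"
  shows "distr (M \<Otimes>\<^sub>M N) N snd = N"
proof -
  interpret M: prob_space M by fact
  interpret N: prob_space N by fact
  show ?thesis
  proof (intro measure_eqI)
    fix A assume A: "A \<in> sets (distr (M \<Otimes>\<^sub>M N) N snd)"
    from A have "emeasure (distr (M \<Otimes>\<^sub>M N) N snd) A = emeasure (M \<Otimes>\<^sub>M N) (space M \<times> A)"
      by (auto simp add: emeasure_distr space_pair_measure dest: sets.sets_into_space intro!: arg_cong2[where f=emeasure])
    with A show "emeasure (distr (M \<Otimes>\<^sub>M N) N snd) A = emeasure N A"
      by (simp add: N.emeasure_pair_measure_Times M.emeasure_space_1)
  qed simp
qed


context
  fixes f :: "real \<Rightarrow> real" and P Q :: "'a measure" and M :: real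
  assumes conc: "concave_on UNIV f" and f0: "f 0 = 0" and fM: "\<And>x. f x \<le> M"
    and PP: "prob_space P" and QQ: "prob_space Q" and sPQ: "sets P = sets Q"
begin

lemma fmeas[measurable]: "f \<in> borel_measurable borel"
  using concave_meas[OF conc] .

lemma PQ: "pair_prob_space P Q"
  using PP QQ by (simp add: pair_prob_space_def pair_sigma_finite_def prob_space_imp_sigma_finite)

lemma measQ: "C \<in> borel_measurable P \<Longrightarrow> C \<in> borel_measurable Q"
  using measurable_cong_sets[OF sPQ refl] by blast

lemma int_le_M:
  fixes h :: "'b \<Rightarrow> real"
  assumes "prob_space N" "integrable N h" "\<And>x. h x \<le> c"
  shows "integral\<^sup>L N h \<le> c"
proof -
  interpret prob_space N by fact
  show ?thesis using integral_le_const[of h c] assms by simp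
qed

lemma core:
  assumes Cm: "C \<in> borel_measurable P" and CB: "\<And>x. \<bar>C x\<bar> \<le> B"
  shows "integrable (P \<Otimes>\<^sub>M Q) (\<lambda>z. f (C (fst z) - C (snd z)))"
    and "integrable Q C" and "integrable P C"
    and "integrable P (\<lambda>x. f (C x - (\<integral>y. C y \<partial>Q)))"
    and "integrable Q (\<lambda>y. f ((\<integral>x. C x \<partial>P) - C y))"
    and "(\<integral>z. f (C (fst z) - C (snd z)) \<partial>(P \<Otimes>\<^sub>M Q)) \<le> (\<integral>x. f (C x - (\<integral>y. C y \<partial>Q)) \<partial>P)"
    and "(\<integral>z. f (C (fst z) - C (snd z)) \<partial>(P \<Otimes>\<^sub>M Q)) \<le> (\<integral>y. f ((\<integral>x. C x \<partial>P) - C y) \<partial>Q)"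
proof -
  interpret PQ: pair_prob_space P Q by (rule PQ)
  have CmQ[measurable]: "C \<in> borel_measurable Q" using measQ[OF Cm] .
  note Cm[measurable]
  define K where "K = \<bar>M\<bar> + \<bar>f (2*B)\<bar> + \<bar>f (-(2*B))\<bar>"
  have fK: "\<bar>f (a - b)\<bar> \<le> K" if "\<bar>a\<bar> \<le> B" "\<bar>b\<bar> \<le> B" for a b
    unfolding K_def using that
    by (intro concave_bound[OF conc f0 fM]) linarith
  have CBu: "C x \<le> B" for x using CB[of x] by linarith
  have CBl: "-B \<le> C x" for x using CB[of x] by linarith
  show i1: "integrable (P \<Otimes>\<^sub>M Q) (\<lambda>z. f (C (fst z) - C (snd z)))"
    by (rule PQ.P.integrable_const_bound[where B=K]) (use fK CB in auto)
  show i2: "integrable Q C"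
    by (rule PQ.M2.integrable_const_bound[where B=B]) (use CB in auto)
  show i3: "integrable P C"
    by (rule PQ.M1.integrable_const_bound[where B=B]) (use CB in auto)
  have EQ: "\<bar>(\<integral>y. C y \<partial>Q)\<bar> \<le> B"
  proof -
    have "AE x in Q. C x \<le> B" "AE x in Q. -B \<le> C x" using CBu CBl by auto
    then show ?thesis
      using PQ.M2.integral_le_const[OF i2, of B] PQ.M2.integral_ge_const[OF i2, of "-B"]
      by (auto simp: abs_le_iff)
  qed
  have EP: "\<bar>(\<integral>y. C y \<partial>P)\<bar> \<le> B"
  proof -
    have "AE x in P. C x \<le> B" "AE x in P. -B \<le> C x" using CBu CBl by auto
    then show ?thesis
      using PQ.M1.integral_le_const[OF i3, of B] PQ.M1.integral_ge_const[OF i3, of "-B"]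
      by (auto simp: abs_le_iff)
  qed
  show i4: "integrable P (\<lambda>x. f (C x - (\<integral>y. C y \<partial>Q)))"
    by (rule PQ.M1.integrable_const_bound[where B=K]) (use fK CB EQ in auto)
  show i5: "integrable Q (\<lambda>y. f ((\<integral>x. C x \<partial>P) - C y))"
    by (rule PQ.M2.integrable_const_bound[where B=K]) (use fK CB EP in auto)
  have eqf: "(\<lambda>z. f (C (fst z) - C (snd z))) = (\<lambda>(x,y). f (C x - C y))"
    by auto
  have i1': "integrable (P \<Otimes>\<^sub>M Q) (\<lambda>(x,y). f (C x - C y))"
    using i1 eqf by simp
  have J1: "(\<integral>y. f (C x - C y) \<partial>Q) \<le> f (C x - (\<integral>y. C y \<partial>Q))" for x
  proof -
    have a: "integrable Q (\<lambda>y. C x - C y)" using i2 by simp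
    have b: "integrable Q (\<lambda>y. f (C x - C y))"
      by (rule PQ.M2.integrable_const_bound[where B=K]) (use fK CB in auto)
    have "(\<integral>y. C x - C y \<partial>Q) = C x - (\<integral>y. C y \<partial>Q)"
      using i2 by (simp add: PQ.M2.prob_space)
    then show ?thesis using jensen_concave[OF QQ conc a b] by simp
  qed
  have J2: "(\<integral>x. f (C x - C y) \<partial>P) \<le> f ((\<integral>x. C x \<partial>P) - C y)" for y
  proof -
    have a: "integrable P (\<lambda>x. C x - C y)" using i3 by simp
    have b: "integrable P (\<lambda>x. f (C x - C y))"
      by (rule PQ.M1.integrable_const_bound[where B=K]) (use fK CB in auto)
    have "(\<integral>x. C x - C y \<partial>P) = (\<integral>x. C x \<partial>P) - C y"
      using i3 by (simp add: PQ.M1.prob_space)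
    then show ?thesis using jensen_concave[OF PP conc a b] by simp
  qed
  have "(\<integral>z. f (C (fst z) - C (snd z)) \<partial>(P \<Otimes>\<^sub>M Q)) = (\<integral>x. (\<integral>y. f (C x - C y) \<partial>Q) \<partial>P)"
    using PQ.integral_fst[OF i1'] eqf by simp
  also have "\<dots> \<le> (\<integral>x. f (C x - (\<integral>y. C y \<partial>Q)) \<partial>P)"
    by (rule integral_mono[OF PQ.integrable_fst[OF i1'] i4 J1])
  finally show "(\<integral>z. f (C (fst z) - C (snd z)) \<partial>(P \<Otimes>\<^sub>M Q)) \<le> (\<integral>x. f (C x - (\<integral>y. C y \<partial>Q)) \<partial>P)" .
  have "(\<integral>z. f (C (fst z) - C (snd z)) \<partial>(P \<Otimes>\<^sub>M Q)) = (\<integral>y. (\<integral>x. f (C x - C y) \<partial>P) \<partial>Q)"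
    using PQ.integral_snd[OF i1'] eqf by simp
  also have "\<dots> \<le> (\<integral>y. f ((\<integral>x. C x \<partial>P) - C y) \<partial>Q)"
    by (rule integral_mono[OF PQ.integrable_snd[OF i1'] i5 J2])
  finally show "(\<integral>z. f (C (fst z) - C (snd z)) \<partial>(P \<Otimes>\<^sub>M Q)) \<le> (\<integral>y. f ((\<integral>x. C x \<partial>P) - C y) \<partial>Q)" .
qed

lemma clamp:
  fixes a b r :: real
  shows "(0 \<le> max (-r) (min r a) - max (-r) (min r b) \<and> max (-r) (min r a) - max (-r) (min r b) \<le> a - b)
    \<or> (a - b \<le> max (-r) (min r a) - max (-r) (min r b) \<and> max (-r) (min r a) - max (-r) (min r b) \<le> 0)"
  by (auto simp: max_def min_def)

lemma pxq: "prob_space (P \<Otimes>\<^sub>M Q)"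
proof -
  interpret PQ: pair_prob_space P Q by (rule PQ)
  show ?thesis by (rule PQ.P.prob_space_axioms)
qed

lemma bddRp: "bdd_above ((\<lambda>C. 2 * (\<integral>z. f (C (fst z) - C (snd z)) \<partial>(P \<Otimes>\<^sub>M Q))) `
   {C. C \<in> borel_measurable P \<and> integrable (P \<Otimes>\<^sub>M Q) (\<lambda>z. f (C (fst z) - C (snd z)))})"
  by (rule bdd_aboveI[where M="2*M"]) (use int_le_M[OF pxq _ fM] in auto)

lemma bddRalf: "bdd_above ((\<lambda>C. 2 * (\<integral>x. f (C x - (\<integral>y. C y \<partial>Q)) \<partial>P)) `
   {C. C \<in> borel_measurable P \<and> integrable Q C \<and> integrable P (\<lambda>x. f (C x - (\<integral>y. C y \<partial>Q)))})"
  by (rule bdd_aboveI[where M="2*M"]) (use int_le_M[OF PP _ fM] in auto)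

lemma bddRa: "bdd_above ((\<lambda>C. (\<integral>x. f (C x - (\<integral>y. C y \<partial>Q)) \<partial>P) + (\<integral>y. f ((\<integral>x. C x \<partial>P) - C y) \<partial>Q)) `
   {C. C \<in> borel_measurable P \<and> integrable P C \<and> integrable Q C
                         \<and> integrable P (\<lambda>x. f (C x - (\<integral>y. C y \<partial>Q)))
                         \<and> integrable Q (\<lambda>y. f ((\<integral>x. C x \<partial>P) - C y))})"
proof (rule bdd_aboveI[where M="M+M"])
  fix v assume "v \<in> (\<lambda>C. (\<integral>x. f (C x - (\<integral>y. C y \<partial>Q)) \<partial>P) + (\<integral>y. f ((\<integral>x. C x \<partial>P) - C y) \<partial>Q)) `
   {C. C \<in> borel_measurable P \<and> integrable P C \<and> integrable Q C
                         \<and> integrable P (\<lambda>x. f (C x - (\<integral>y. C y \<partial>Q)))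
                         \<and> integrable Q (\<lambda>y. f ((\<integral>x. C x \<partial>P) - C y))}"
  then obtain C where "integrable P (\<lambda>x. f (C x - (\<integral>y. C y \<partial>Q)))"
     "integrable Q (\<lambda>y. f ((\<integral>x. C x \<partial>P) - C y))"
     "v = (\<integral>x. f (C x - (\<integral>y. C y \<partial>Q)) \<partial>P) + (\<integral>y. f ((\<integral>x. C x \<partial>P) - C y) \<partial>Q)" by auto
  then show "v \<le> M + M" using int_le_M[OF PP _ fM] int_le_M[OF QQ _ fM] by (metis add_mono)
qed

lemma S_le_Rp: "D_S f P Q \<le> D_Rp f P Q"
  unfolding D_S_def
proof (rule cSUP_least)
  show "{C. C \<in> borel_measurable P \<and> integrable P (\<lambda>x. f (C x)) \<and> integrable Q (\<lambda>y. f (- C y))} \<noteq> {}"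
  proof -
    interpret PQ: pair_prob_space P Q by (rule PQ)
    have "(\<lambda>_. 0) \<in> {C. C \<in> borel_measurable P \<and> integrable P (\<lambda>x. f (C x)) \<and> integrable Q (\<lambda>y. f (- C y))}"
      using f0 by simp
    then show ?thesis by blast
  qed
next
  fix C assume "C \<in> {C. C \<in> borel_measurable P \<and> integrable P (\<lambda>x. f (C x)) \<and> integrable Q (\<lambda>y. f (- C y))}"
  then have Cm[measurable]: "C \<in> borel_measurable P" and ia: "integrable P (\<lambda>x. f (C x))"
    and ib: "integrable Q (\<lambda>y. f (- C y))" by auto
  interpret PQ: pair_prob_space P Q by (rule PQ)
  have CmQ[measurable]: "C \<in> borel_measurable Q" using measQ[OF Cm] .
  define h where "h = (\<lambda>z. f ((\<lambda>x. C x / 2) (fst z) - (\<lambda>x. C x / 2) (snd z)))"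
  define lo where "lo = (\<lambda>z. (f (C (fst z)) + f (- C (snd z))) / 2)"
  have hlo: "lo z \<le> h z" for z
    unfolding lo_def h_def using concave_mid[OF conc, of "C (fst z)" "- C (snd z)"]
    by (simp add: diff_divide_distrib)
  have hM: "h z \<le> M" for z unfolding h_def by (rule fM)
  have dfst: "distr (P \<Otimes>\<^sub>M Q) P fst = P" by (rule PQ.M2.distr_pair_fst)
  have dsnd: "distr (P \<Otimes>\<^sub>M Q) Q snd = Q" by (rule distr_pair_snd'[OF PP QQ])
  have ia': "integrable (P \<Otimes>\<^sub>M Q) (\<lambda>z. f (C (fst z)))"
    using integrable_distr_eq[of fst "P \<Otimes>\<^sub>M Q" P "\<lambda>x. f (C x)"] dfst ia by simp
  have ib': "integrable (P \<Otimes>\<^sub>M Q) (\<lambda>z. f (- C (snd z)))"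
    using integrable_distr_eq[of snd "P \<Otimes>\<^sub>M Q" Q "\<lambda>x. f (- C x)"] dsnd ib by simp
  have ea: "(\<integral>z. f (C (fst z)) \<partial>(P \<Otimes>\<^sub>M Q)) = (\<integral>x. f (C x) \<partial>P)"
    using integral_distr[of fst "P \<Otimes>\<^sub>M Q" P "\<lambda>x. f (C x)"] dfst by simp
  have eb: "(\<integral>z. f (- C (snd z)) \<partial>(P \<Otimes>\<^sub>M Q)) = (\<integral>x. f (- C x) \<partial>Q)"
    using integral_distr[of snd "P \<Otimes>\<^sub>M Q" Q "\<lambda>x. f (- C x)"] dsnd by simp
  have ilo: "integrable (P \<Otimes>\<^sub>M Q) lo" unfolding lo_def using ia' ib' by simp
  have elo: "(\<integral>z. lo z \<partial>(P \<Otimes>\<^sub>M Q)) = ((\<integral>x. f (C x) \<partial>P) + (\<integral>x. f (- C x) \<partial>Q)) / 2"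
    unfolding lo_def using ia' ib' ea eb by simp
  have hm: "h \<in> borel_measurable (P \<Otimes>\<^sub>M Q)" unfolding h_def by measurable
  have ih: "integrable (P \<Otimes>\<^sub>M Q) h"
  proof (rule Bochner_Integration.integrable_bound[OF _ hm])
    show "integrable (P \<Otimes>\<^sub>M Q) (\<lambda>z. \<bar>lo z\<bar> + \<bar>M\<bar>)" using ilo by simp
    show "AE x in P \<Otimes>\<^sub>M Q. norm (h x) \<le> norm (\<bar>lo x\<bar> + \<bar>M\<bar>)"
      using hlo hM by (intro AE_I2) (smt (verit) real_norm_def)
  qed
  have mem: "(\<lambda>x. C x / 2) \<in> {C. C \<in> borel_measurable P \<and> integrable (P \<Otimes>\<^sub>M Q) (\<lambda>z. f (C (fst z) - C (snd z)))}"
    using ih unfolding h_def by simp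
  have "(\<integral>x. f (C x) \<partial>P) + (\<integral>x. f (- C x) \<partial>Q) = 2 * (\<integral>z. lo z \<partial>(P \<Otimes>\<^sub>M Q))" using elo by simp
  also have "\<dots> \<le> 2 * (\<integral>z. h z \<partial>(P \<Otimes>\<^sub>M Q))"
    using integral_mono[OF ilo ih hlo] by simp
  also have "\<dots> \<le> D_Rp f P Q"
    unfolding D_Rp_def h_def by (rule cSUP_upper[OF mem bddRp])
  finally show "(\<integral>x. f (C x) \<partial>P) + (\<integral>y. f (- C y) \<partial>Q) \<le> D_Rp f P Q" .
qed

lemma Rp_elem:
  assumes Cm[measurable]: "C \<in> borel_measurable P"
    and ig: "integrable (P \<Otimes>\<^sub>M Q) (\<lambda>z. f (C (fst z) - C (snd z)))"
  shows "2 * (\<integral>z. f (C (fst z) - C (snd z)) \<partial>(P \<Otimes>\<^sub>M Q)) \<le> D_Ralf f P Q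
    \<and> 2 * (\<integral>z. f (C (fst z) - C (snd z)) \<partial>(P \<Otimes>\<^sub>M Q)) \<le> D_Ra f P Q"
proof -
  interpret PQ: pair_prob_space P Q by (rule PQ)
  have CmQ[measurable]: "C \<in> borel_measurable Q" using measQ[OF Cm] .
  define Cn where "Cn = (\<lambda>(n::nat) x. max (- real n) (min (real n) (C x)))"
  define g where "g = (\<lambda>z. f (C (fst z) - C (snd z)))"
  define sn where "sn = (\<lambda>n z. f (Cn n (fst z) - Cn n (snd z)))"
  have Cnm[measurable]: "Cn n \<in> borel_measurable P" for n unfolding Cn_def by measurable
  have CnB: "\<bar>Cn n x\<bar> \<le> real n" for n x unfolding Cn_def by auto
  have lim: "(\<lambda>n. \<integral>z. sn n z \<partial>(P \<Otimes>\<^sub>M Q)) \<longlonglongrightarrow> (\<integral>z. g z \<partial>(P \<Otimes>\<^sub>M Q))"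
  proof (rule integral_dominated_convergence[where w="\<lambda>z. \<bar>M\<bar> + \<bar>g z\<bar>"])
    show "g \<in> borel_measurable (P \<Otimes>\<^sub>M Q)" unfolding g_def by measurable
    show "sn n \<in> borel_measurable (P \<Otimes>\<^sub>M Q)" for n unfolding sn_def
      using Cnm[of n] measQ[OF Cnm[of n]] by measurable
    show "integrable (P \<Otimes>\<^sub>M Q) (\<lambda>z. \<bar>M\<bar> + \<bar>g z\<bar>)" using ig unfolding g_def by simp
    show "AE z in P \<Otimes>\<^sub>M Q. (\<lambda>n. sn n z) \<longlonglongrightarrow> g z"
    proof (intro AE_I2 tendsto_eventually)
      fix z :: "'a \<times> 'a"
      obtain N :: nat where N: "\<bar>C (fst z)\<bar> + \<bar>C (snd z)\<bar> \<le> real N" using real_arch_simple by blast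
      show "\<forall>\<^sub>F n in sequentially. sn n z = g z"
        unfolding eventually_sequentially
      proof (intro exI allI impI)
        fix n assume "N \<le> n"
        then have "real N \<le> real n" by simp
        then have "Cn n (fst z) = C (fst z)" "Cn n (snd z) = C (snd z)"
          using N unfolding Cn_def by auto
        then show "sn n z = g z" unfolding sn_def g_def by simp
      qed
    qed
    show "AE z in P \<Otimes>\<^sub>M Q. norm (sn n z) \<le> \<bar>M\<bar> + \<bar>g z\<bar>" for n
    proof (intro AE_I2)
      fix z :: "'a \<times> 'a"
      have "min 0 (g z) \<le> sn n z"
        unfolding sn_def g_def Cn_def
        by (rule concave_between[OF conc f0]) (rule clamp)
      moreover have "sn n z \<le> M" unfolding sn_def by (rule fM)
      ultimately show "norm (sn n z) \<le> \<bar>M\<bar> + \<bar>g z\<bar>" by auto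
    qed
  qed
  have le1: "2 * (\<integral>z. sn n z \<partial>(P \<Otimes>\<^sub>M Q)) \<le> D_Ralf f P Q" for n
  proof -
    note c = core[OF Cnm[of n] CnB[of n]]
    have mem: "Cn n \<in> {C. C \<in> borel_measurable P \<and> integrable Q C \<and> integrable P (\<lambda>x. f (C x - (\<integral>y. C y \<partial>Q)))}"
      using c by simp
    have "2 * (\<integral>z. sn n z \<partial>(P \<Otimes>\<^sub>M Q)) \<le> 2 * (\<integral>x. f (Cn n x - (\<integral>y. Cn n y \<partial>Q)) \<partial>P)"
      using c(6) unfolding sn_def by simp
    also have "\<dots> \<le> D_Ralf f P Q"
      unfolding D_Ralf_def by (rule cSUP_upper[OF mem bddRalf])
    finally show ?thesis .
  qed
  have le2: "2 * (\<integral>z. sn n z \<partial>(P \<Otimes>\<^sub>M Q)) \<le> D_Ra f P Q" for n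
  proof -
    note c = core[OF Cnm[of n] CnB[of n]]
    have mem: "Cn n \<in> {C. C \<in> borel_measurable P \<and> integrable P C \<and> integrable Q C
                         \<and> integrable P (\<lambda>x. f (C x - (\<integral>y. C y \<partial>Q)))
                         \<and> integrable Q (\<lambda>y. f ((\<integral>x. C x \<partial>P) - C y))}"
      using c by simp
    have "2 * (\<integral>z. sn n z \<partial>(P \<Otimes>\<^sub>M Q)) \<le> (\<integral>x. f (Cn n x - (\<integral>y. Cn n y \<partial>Q)) \<partial>P) + (\<integral>y. f ((\<integral>x. Cn n x \<partial>P) - Cn n y) \<partial>Q)"
      using c(6) c(7) unfolding sn_def by simp
    also have "\<dots> \<le> D_Ra f P Q"
      unfolding D_Ra_def by (rule cSUP_upper[OF mem bddRa])
    finally show ?thesis .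
  qed
  have lim2: "(\<lambda>n. 2 * (\<integral>z. sn n z \<partial>(P \<Otimes>\<^sub>M Q))) \<longlonglongrightarrow> 2 * (\<integral>z. g z \<partial>(P \<Otimes>\<^sub>M Q))"
    by (intro tendsto_mult_left lim)
  have "2 * (\<integral>z. g z \<partial>(P \<Otimes>\<^sub>M Q)) \<le> D_Ralf f P Q"
    by (rule LIMSEQ_le_const2[OF lim2]) (use le1 in auto)
  moreover have "2 * (\<integral>z. g z \<partial>(P \<Otimes>\<^sub>M Q)) \<le> D_Ra f P Q"
    by (rule LIMSEQ_le_const2[OF lim2]) (use le2 in auto)
  ultimately show ?thesis unfolding g_def by simp
qed

lemma Rp_le: "D_Rp f P Q \<le> D_Ralf f P Q \<and> D_Rp f P Q \<le> D_Ra f P Q"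
proof -
  interpret PQ: pair_prob_space P Q by (rule PQ)
  have ne: "{C. C \<in> borel_measurable P \<and> integrable (P \<Otimes>\<^sub>M Q) (\<lambda>z. f (C (fst z) - C (snd z)))} \<noteq> {}"
  proof -
    have "(\<lambda>_. 0) \<in> {C. C \<in> borel_measurable P \<and> integrable (P \<Otimes>\<^sub>M Q) (\<lambda>z. f (C (fst z) - C (snd z)))}"
      using f0 by simp
    then show ?thesis by blast
  qed
  show ?thesis unfolding D_Rp_def
    by (intro conjI cSUP_least[OF ne]) (use Rp_elem in auto)
qed

end

theorem mainTheorem3:
  fixes f :: "real \<Rightarrow> real" and P Q :: "'a measure" and M :: real
  assumes "concave_on UNIV f"
    and "f 0 = 0"
    and "f differentiable (at 0)"
    and "deriv f 0 \<noteq> 0"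
    and "bdd_above (range f)"
    and "(SUP x. f x) = M" and "M > 0"
    and "argsup_pos f"
    and "prob_space P" and "prob_space Q"
    and "sets P = sets Q"
  shows "D_S f P Q \<le> D_Rp f P Q \<and> D_Rp f P Q \<le> D_Ralf f P Q \<and> D_Rp f P Q \<le> D_Ra f P Q"
proof -
  have fM: "\<And>x. f x \<le> M" using assms(5,6) by (metis cSUP_upper UNIV_I)
  show ?thesis
    using S_le_Rp[OF assms(1,2) fM assms(9,10,11)] Rp_le[OF assms(1,2) fM assms(9,10,11)] by simp
qed

end
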